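(* Let $\mathcal{V}$ be a finely representable action with associated complete interaction $(\mathcal{V},\mathcal{H})$, and let $a\in C_0$. For any presentation $$a=\sum_{x\in F}q_{-x}+a_0+\sum_{x\in F}q_x,$$ where $F$ is a finite subset of $\Gamma^+\setminus\{0\}$, $a_0\in\mathcal{A}$, and for each $x\in F$, $q_{-x}$ (resp. $q_x$) is a quasi-monomial of negative (resp. positive) type of degree $x$, we have $\|a_0\|\le\|a\|$. In particular $a_0$ is uniquely determined by $a$.
   Context: $\mathcal{A}$ is a unital C$^*$-algebra, $\Gamma$ a totally ordered abelian group with identity $0$, $\Gamma^+=\{x\in\Gamma:0\le x\}$. An action of $\Gamma^+$ on $\mathcal{A}$ is a map $x\mapsto\mathcal{V}_x$ into the bounded positive linear maps on $\mathcal{A}$ with $\mathcal{V}_0=\mathrm{Id}$, $\mathcal{V}_x\mathcal{V}_y=\mathcal{V}_{x+y}$. A covariant representation of $\mathcal{V}$ is a triple $(C,\sigma,U)$ with $C$ a unital C$^*$-algebra, $\sigma:\mathcal{A}\to C$ a unital injective $*$-homomorphism and $U:\Gamma^+\to C$ a semigroup homomorphism with each $U_x$ a partial isometry, such that $\sigma(\mathcal{V}_x(a))=U_x\sigma(a)U_x^*$ and $U_x^*\sigma(a)U_x\in\sigma(\mathcal{A})$; $\mathcal{V}$ is finely representable if such exists. For finely representable $\mathcal{V}$ there is a unique action $\mathcal{H}$ (with $\sigma(\mathcal{H}_x(a))=U_x^*\sigma(a)U_x$ for every covariant representation) such that $(\mathcal{V},\mathcal{H})$ is a complete interaction. The crossed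 product $\mathcal{A}\rtimes_{(\mathcal{V},\mathcal{H})}\Gamma$ is the universal unital C$^*$-algebra generated by a copy of $\mathcal{A}$ and partial isometries $\{\hat U_x\}_{x\in\Gamma^+}$ subject to $\mathcal{V}_x(a)=\hat U_xa\hat U_x^*$, $\mathcal{H}_x(a)=\hat U_x^*a\hat U_x$, $\hat U_x\hat U_y=\hat U_{x+y}$. $C_0$ is the $*$-subalgebra generated by $\mathcal{A}$ and the $\hat U_x$. A monomial of negative (resp. positive) type is $a_1\hat U_{x_1}^*\cdots a_n\hat U_{x_n}^*$ (resp. $a_1\hat U_{x_1}\cdots a_n\hat U_{x_n}$) with $a_i\in\mathcal{A}$, $x_i\in\Gamma^+$, of degree $x_1+\dots+x_n$; a quasi-monomial of degree $x$ is a finite sum of monomials of the same type, all of degree $x$. Every element of $C_0$ admits a presentation of the displayed form. *)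

theory Defs
  imports "HOL-Analysis.Analysis"
begin

text \<open>The whole type is the algebra.\<close>

class cstar = banach + real_normed_algebra_1 +
  fixes cscale :: "complex \<Rightarrow> 'a \<Rightarrow> 'a"
    and invol :: "'a \<Rightarrow> 'a"
  assumes cscale_add_left: "cscale (c + d) x = cscale c x + cscale d x"
    and cscale_add_right: "cscale c (x + y) = cscale c x + cscale c y"
    and cscale_mult: "cscale (c * d) x = cscale c (cscale d x)"
    and cscale_one: "cscale 1 x = x"
    and cscale_of_real: "cscale (complex_of_real r) x = scaleR r x"
    and norm_cscale: "norm (cscale c x) = cmod c * norm x"
    and cscale_mult_left: "cscale c (x * y) = cscale c x * y"
    and cscale_mult_right: "cscale c (x * y) = x * cscale c y"
    and invol_invol: "invol (invol x) = x"
    and invol_add: "invol (x + y) = invol x + invol y"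
    and invol_mult: "invol (x * y) = invol y * invol x"
    and invol_cscale: "invol (cscale c x) = cscale (cnj c) (invol x)"
    and cstar_identity: "norm (invol x * x) = (norm x)\<^sup>2"

definition cpositive :: "'a::cstar \<Rightarrow> bool" where
  "cpositive a \<longleftrightarrow> (\<exists>b. a = invol b * b)"

definition clinear :: "('a::cstar \<Rightarrow> 'b::cstar) \<Rightarrow> bool" where
  "clinear f \<longleftrightarrow> (\<forall>x y. f (x + y) = f x + f y) \<and> (\<forall>c x. f (cscale c x) = cscale c (f x))"

definition bounded_positive_map :: "('a::cstar \<Rightarrow> 'a) \<Rightarrow> bool" where
  "bounded_positive_map f \<longleftrightarrow> clinear f \<and> (\<exists>K. \<forall>x. norm (f x) \<le> K * norm x)
      \<and> (\<forall>x. cpositive x \<longrightarrow> cpositive (f x))"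

definition star_hom :: "('a::cstar \<Rightarrow> 'b::cstar) \<Rightarrow> bool" where
  "star_hom f \<longleftrightarrow> clinear f \<and> (\<forall>x y. f (x * y) = f x * f y) \<and> (\<forall>x. f (invol x) = invol (f x))"

definition unital_star_hom :: "('a::cstar \<Rightarrow> 'b::cstar) \<Rightarrow> bool" where
  "unital_star_hom f \<longleftrightarrow> star_hom f \<and> f 1 = 1"

definition partial_isometry :: "'a::cstar \<Rightarrow> bool" where
  "partial_isometry u \<longleftrightarrow> u * invol u * u = u"

text \<open>Gamma is a type of class linordered_ab_group_add; maps are only relevant on
Gamma+ = {x. 0 <= x}.\<close>

definition is_action :: "('g::linordered_ab_group_add \<Rightarrow> 'a::cstar \<Rightarrow> 'a) \<Rightarrow> bool" where
  "is_action V \<longleftrightarrow> (\<forall>x\<ge>0. bounded_positive_map (V x)) \<and> V 0 = id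
      \<and> (\<forall>x\<ge>0. \<forall>y\<ge>0. V x \<circ> V y = V (x + y))"

text \<open>Covariant representation (C, sigma, U) of V, with C the C*-algebra given by the type 'c.\<close>

definition covariant_rep ::
  "('g::linordered_ab_group_add \<Rightarrow> 'a::cstar \<Rightarrow> 'a) \<Rightarrow> ('a \<Rightarrow> 'c::cstar) \<Rightarrow> ('g \<Rightarrow> 'c) \<Rightarrow> bool" where
  "covariant_rep V \<sigma> U \<longleftrightarrow> unital_star_hom \<sigma> \<and> inj \<sigma>
      \<and> (\<forall>x\<ge>0. \<forall>y\<ge>0. U (x + y) = U x * U y)
      \<and> (\<forall>x\<ge>0. partial_isometry (U x))
      \<and> (\<forall>x\<ge>0. \<forall>a. \<sigma> (V x a) = U x * \<sigma> a * invol (U x))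
      \<and> (\<forall>x\<ge>0. \<forall>a. \<exists>b. invol (U x) * \<sigma> a * U x = \<sigma> b)"

text \<open>Representation of the defining relations of the crossed product
A \<rtimes>_(V,H) Gamma in the C*-algebra 'c.  The universal norm of an element of C_0 is
the supremum of its norms under all such representations.\<close>

definition cp_rep ::
  "('g::linordered_ab_group_add \<Rightarrow> 'a::cstar \<Rightarrow> 'a) \<Rightarrow> ('g \<Rightarrow> 'a \<Rightarrow> 'a) \<Rightarrow> ('a \<Rightarrow> 'c::cstar) \<Rightarrow> ('g \<Rightarrow> 'c) \<Rightarrow> bool" where
  "cp_rep V H \<rho> W \<longleftrightarrow> unital_star_hom \<rho>
      \<and> (\<forall>x\<ge>0. \<forall>y\<ge>0. W (x + y) = W x * W y)
      \<and> (\<forall>x\<ge>0. partial_isometry (W x))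
      \<and> (\<forall>x\<ge>0. \<forall>a. \<rho> (V x a) = W x * \<rho> a * invol (W x))
      \<and> (\<forall>x\<ge>0. \<forall>a. \<rho> (H x a) = invol (W x) * \<rho> a * W x)"

text \<open>A monomial is a list [(a1,x1),...,(an,xn)]; of negative type it denotes
a1 U*_{x1} ... an U*_{xn}, of positive type a1 U_{x1} ... an U_{xn}.\<close>

definition mono_neg :: "('a::cstar \<Rightarrow> 'c::cstar) \<Rightarrow> ('g \<Rightarrow> 'c) \<Rightarrow> ('a \<times> 'g) list \<Rightarrow> 'c" where
  "mono_neg \<rho> W m = foldr (\<lambda>(a, x) r. \<rho> a * invol (W x) * r) m 1"

definition mono_pos :: "('a::cstar \<Rightarrow> 'c::cstar) \<Rightarrow> ('g \<Rightarrow> 'c) \<Rightarrow> ('a \<times> 'g) list \<Rightarrow> 'c" where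
  "mono_pos \<rho> W m = foldr (\<lambda>(a, x) r. \<rho> a * W x * r) m 1"

definition mono_degree_ok :: "'g::linordered_ab_group_add \<Rightarrow> ('a \<times> 'g) list \<Rightarrow> bool" where
  "mono_degree_ok d m \<longleftrightarrow> (\<forall>p\<in>set m. 0 \<le> snd p) \<and> sum_list (map snd m) = d"

text \<open>A quasi-monomial of degree d: a finite sum (list) of monomials, all of degree d.\<close>

definition quasi_mono :: "'g::linordered_ab_group_add \<Rightarrow> ('a \<times> 'g) list list \<Rightarrow> bool" where
  "quasi_mono d q \<longleftrightarrow> (\<forall>m\<in>set q. mono_degree_ok d m)"

definition qm_neg :: "('a::cstar \<Rightarrow> 'c::cstar) \<Rightarrow> ('g \<Rightarrow> 'c) \<Rightarrow> ('a \<times> 'g) list list \<Rightarrow> 'c" where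
  "qm_neg \<rho> W q = sum_list (map (mono_neg \<rho> W) q)"

definition qm_pos :: "('a::cstar \<Rightarrow> 'c::cstar) \<Rightarrow> ('g \<Rightarrow> 'c) \<Rightarrow> ('a \<times> 'g) list list \<Rightarrow> 'c" where
  "qm_pos \<rho> W q = sum_list (map (mono_pos \<rho> W) q)"

definition presentation ::
  "'g::linordered_ab_group_add set \<Rightarrow> ('g \<Rightarrow> ('a \<times> 'g) list list) \<Rightarrow> ('g \<Rightarrow> ('a \<times> 'g) list list) \<Rightarrow> bool" where
  "presentation F qn qp \<longleftrightarrow> finite F \<and> (\<forall>x\<in>F. 0 < x)
      \<and> (\<forall>x\<in>F. quasi_mono x (qn x) \<and> quasi_mono x (qp x))"

definition pres_val ::
  "('a::cstar \<Rightarrow> 'c::cstar) \<Rightarrow> ('g \<Rightarrow> 'c) \<Rightarrow> 'g set \<Rightarrow> ('g \<Rightarrow> ('a \<times> 'g) list list) \<Rightarrow> 'a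
     \<Rightarrow> ('g \<Rightarrow> ('a \<times> 'g) list list) \<Rightarrow> 'c" where
  "pres_val \<rho> W F qn a0 qp = (\<Sum>x\<in>F. qm_neg \<rho> W (qn x)) + \<rho> a0 + (\<Sum>x\<in>F. qm_pos \<rho> W (qp x))"

end

theory Submission
  imports Defs "HOL-Computational_Algebra.Formal_Power_Series" "HOL-Algebra.Group"
begin

lemma invol_0 [simp]: "invol (0::'a::cstar) = 0"
  using invol_add[of "0::'a" 0] by simp

lemma invol_minus [simp]: "invol (- x) = - invol (x::'a::cstar)"
  using invol_add[of x "-x"] by (simp add: eq_neg_iff_add_eq_0 add.commute)

lemma invol_diff [simp]: "invol (x - y) = invol x - invol (y::'a::cstar)"
  using invol_add[of x "-y"] by simp

lemma invol_scaleR [simp]: "invol (scaleR r x) = scaleR r (invol (x::'a::cstar))"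
  by (metis cscale_of_real invol_cscale complex_cnj_complex_of_real)

lemma invol_one [simp]: "invol (1::'a::cstar) = 1"
  by (metis invol_invol invol_mult mult_1_right)

lemma norm_le_norm_invol: "norm x \<le> norm (invol (x::'a::cstar))"
proof (cases "x = 0")
  case False
  have "(norm x)^2 = norm (invol x * x)" by (simp add: cstar_identity)
  also have "\<dots> \<le> norm (invol x) * norm x" by (rule norm_mult_ineq)
  finally have "norm x * norm x \<le> norm (invol x) * norm x" by (simp add: power2_eq_square)
  then show ?thesis using False by simp
qed simp

lemma norm_invol [simp]: "norm (invol (x::'a::cstar)) = norm x"
  by (metis antisym invol_invol norm_le_norm_invol)

lemma bounded_linear_invol: "bounded_linear (invol::'a::cstar \<Rightarrow> 'a)"
  by (rule bounded_linear_intro[where K=1]) (auto simp: invol_add)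

lemma invol_mult_simp [simp]: "invol (x * y) = invol y * invol (x::'a::cstar)"
  by (rule invol_mult)

declare invol_invol [simp] invol_add [simp]

lemma norm_sa_square: "invol s = s \<Longrightarrow> norm (s * s) = (norm (s::'a::cstar))^2"
  using cstar_identity[of s] by simp

lemma invol_power: "invol (w ^ n) = (invol (w::'a::cstar)) ^ n"
  by (induction n) (auto simp: power_commutes)

lemma cscale_zero_right [simp]: "cscale c (0::'a::cstar) = 0"
  using cscale_add_right[of c "0::'a" 0] by simp

lemma cscale_zero_left [simp]: "cscale 0 (x::'a::cstar) = 0"
  using cscale_add_left[of 0 0 x] by simp

lemma cscale_minus_right: "cscale c (- x) = - cscale c (x::'a::cstar)"
  using cscale_add_right[of c x "-x"] by (simp add: eq_neg_iff_add_eq_0 add.commute)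

lemma cscale_diff_right: "cscale c (x - y) = cscale c x - cscale c (y::'a::cstar)"
  using cscale_add_right[of c x "-y"] by (simp add: cscale_minus_right)

lemma cscale_mult_both: "cscale c x * cscale d y = cscale (c * d) (x * (y::'a::cstar))"
  by (metis cscale_mult cscale_mult_left cscale_mult_right)

lemma cscale_sum_list: "cscale c (sum_list xs) = sum_list (map (cscale c) (xs::'a::cstar list))"
  by (induction xs) (auto simp: cscale_add_right)

lemma cscale_sum: "cscale c (sum f A) = (\<Sum>x\<in>A. cscale c (f x::'a::cstar))"
  by (induction A rule: infinite_finite_induct) (auto simp: cscale_add_right)

lemma cscale_one_left: "cscale c (1::'a::cstar) * x = cscale c x"
  by (metis cscale_mult_left mult_1_left)

section \<open>Binomial power series in Banach algebras\<close>

definition bc :: "real \<Rightarrow> nat \<Rightarrow> real" where "bc a n = (-1)^n * (a gchoose n)"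

definition ps :: "real \<Rightarrow> 'a::{banach,real_normed_algebra_1} \<Rightarrow> 'a" where
  "ps a w = (\<Sum>n. bc a n *\<^sub>R w ^ n)"

lemma gb_rec: "(a::real) gchoose Suc k = (a gchoose k) * (a - of_nat k) / of_nat (Suc k)"
proof -
  have "of_nat (Suc k) * (a gchoose Suc k) = (a - of_nat k) * (a gchoose k)"
    using gbinomial_absorption[of k a] gbinomial_absorb_comp[of a k] by simp
  then show ?thesis by (simp add: field_simps del: of_nat_Suc)
qed

lemma bc_Suc: "bc a (Suc k) = bc a k * ((of_nat k - a) / of_nat (Suc k))"
  unfolding bc_def gb_rec by (simp add: field_simps del: of_nat_Suc)

lemma bc_0 [simp]: "bc a 0 = 1" by (simp add: bc_def)

lemma bc_nonpos: assumes "0 < a" "a < 1" "1 \<le> n" shows "bc a n \<le> 0"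
  using assms(3)
proof (induction n rule: dec_induct)
  case base then show ?case using assms by (simp add: bc_def)
next
  case (step n)
  have "0 \<le> (of_nat n - a) / of_nat (Suc n)" using step.hyps assms by simp
  then show ?case unfolding bc_Suc by (rule mult_nonpos_nonneg[OF step.IH])
qed

lemma bc_nonneg_shift: assumes "a < 1" shows "0 \<le> bc (a - 1) n"
proof (induction n)
  case (Suc n)
  have "0 \<le> (of_nat n - (a - 1)) / of_nat (Suc n)" using assms by simp
  then show ?case unfolding bc_Suc by (rule mult_nonneg_nonneg[OF Suc.IH])
qed simp

lemma bc_partial: "(\<Sum>k\<le>n. bc a k) = bc (a - 1) n"
  unfolding bc_def using gbinomial_sum_lower_neg[of a n] by (simp add: mult.commute)

lemma bc_summable: assumes "0 < a" "a < 1" shows "summable (\<lambda>n. \<bar>bc a n\<bar>)"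
proof (rule bounded_imp_summable[where B=2])
  fix n
  have "(\<Sum>k\<le>n. \<bar>bc a k\<bar>) = (\<Sum>k\<le>n. (if k = 0 then 2 else 0) - bc a k)"
  proof (rule sum.cong)
    fix k assume "k \<in> {..n}"
    show "\<bar>bc a k\<bar> = (if k = 0 then 2 else 0) - bc a k"
      using bc_nonpos[OF assms, of k] by (cases "k = 0") auto
  qed simp
  also have "\<dots> = 2 - (\<Sum>k\<le>n. bc a k)" by (simp add: sum_subtractf)
  also have "\<dots> \<le> 2" using bc_partial[of a n] bc_nonneg_shift[of a n] assms by simp
  finally show "(\<Sum>k\<le>n. \<bar>bc a k\<bar>) \<le> 2" .
qed simp

lemma bc_conv: "(\<Sum>i\<le>k. bc a i * bc b (k - i)) = bc (a + b) k"
proof -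
  have "(\<Sum>i\<le>k. bc a i * bc b (k - i)) = (\<Sum>i\<le>k. (-1)^k * ((a gchoose i) * (b gchoose (k - i))))"
  proof (rule sum.cong)
    fix i assume "i \<in> {..k}"
    then have "(-1::real)^i * (-1)^(k-i) = (-1)^k" by (simp add: power_add[symmetric])
    then show "bc a i * bc b (k - i) = (-1)^k * ((a gchoose i) * (b gchoose (k - i)))"
      unfolding bc_def by (metis (no_types, lifting) mult.assoc mult.left_commute)
  qed simp
  also have "\<dots> = (-1)^k * (\<Sum>i=0..k. (a gchoose i) * (b gchoose (k - i)))"
    by (simp add: sum_distrib_left atMost_atLeast0)
  also have "\<dots> = bc (a + b) k" by (simp add: gbinomial_Vandermonde bc_def)
  finally show ?thesis .
qed

lemma ps_norm_summable:
  fixes w :: "'a::{banach,real_normed_algebra_1}"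
  assumes "summable (\<lambda>n. \<bar>bc a n\<bar>)" "norm w \<le> 1"
  shows "summable (\<lambda>n. norm (bc a n *\<^sub>R w ^ n))"
proof (rule summable_comparison_test[OF _ assms(1)])
  show "\<exists>N. \<forall>n\<ge>N. norm (norm (bc a n *\<^sub>R w ^ n)) \<le> \<bar>bc a n\<bar>"
  proof (intro exI allI impI)
    fix n
    have "norm (w ^ n) \<le> 1"
      using norm_power_ineq[of w n] power_le_one[OF norm_ge_zero assms(2), of n] by linarith
    then show "norm (norm (bc a n *\<^sub>R w ^ n)) \<le> \<bar>bc a n\<bar>"
      by (simp add: mult_left_le)
  qed
qed

lemma ps_summable:
  fixes w :: "'a::{banach,real_normed_algebra_1}"
  assumes "summable (\<lambda>n. \<bar>bc a n\<bar>)" "norm w \<le> 1"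
  shows "summable (\<lambda>n. bc a n *\<^sub>R w ^ n)"
  using ps_norm_summable[OF assms] by (rule summable_norm_cancel)

lemma ps_mult:
  fixes w :: "'a::{banach,real_normed_algebra_1}"
  assumes "summable (\<lambda>n. \<bar>bc a n\<bar>)" "summable (\<lambda>n. \<bar>bc b n\<bar>)" "norm w \<le> 1"
  shows "ps a w * ps b w = ps (a + b) w"
proof -
  have "ps a w * ps b w = (\<Sum>k. \<Sum>i\<le>k. (bc a i *\<^sub>R w ^ i) * (bc b (k - i) *\<^sub>R w ^ (k - i)))"
    unfolding ps_def by (rule Cauchy_product[OF ps_norm_summable[OF assms(1,3)] ps_norm_summable[OF assms(2,3)]])
  also have "\<dots> = (\<Sum>k. bc (a + b) k *\<^sub>R w ^ k)"
  proof (rule suminf_cong)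
    fix k
    have "(\<Sum>i\<le>k. (bc a i *\<^sub>R w ^ i) * (bc b (k - i) *\<^sub>R w ^ (k - i)))
        = (\<Sum>i\<le>k. (bc a i * bc b (k - i)) *\<^sub>R w ^ k)"
    proof (rule sum.cong)
      fix i assume "i \<in> {..k}"
      then have "w ^ i * w ^ (k - i) = w ^ k" by (simp add: power_add[symmetric])
      then show "(bc a i *\<^sub>R w ^ i) * (bc b (k - i) *\<^sub>R w ^ (k - i)) = (bc a i * bc b (k - i)) *\<^sub>R w ^ k"
        by simp
    qed simp
    also have "\<dots> = (\<Sum>i\<le>k. bc a i * bc b (k - i)) *\<^sub>R w ^ k" by (simp add: scaleR_sum_left)
    finally show "(\<Sum>i\<le>k. (bc a i *\<^sub>R w ^ i) * (bc b (k - i) *\<^sub>R w ^ (k - i))) = bc (a + b) k *\<^sub>R w ^ k"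
      by (simp add: bc_conv)
  qed
  finally show ?thesis unfolding ps_def .
qed

lemma ps_one: "ps 1 (w::'a::{banach,real_normed_algebra_1}) = 1 - w"
proof -
  have z: "bc 1 n = 0" if "n \<notin> {0, 1}" for n
  proof -
    have "(1::real) gchoose n = of_nat (1 choose n)" by (metis binomial_gbinomial of_nat_1)
    also have "\<dots> = 0" using that by (cases n) (auto)
    finally show ?thesis by (simp add: bc_def)
  qed
  have "ps 1 w = (\<Sum>n\<in>{0,1}. bc 1 n *\<^sub>R w ^ n)"
    unfolding ps_def by (rule suminf_finite) (auto simp: z)
  also have "\<dots> = 1 - w" by (simp add: bc_def)
  finally show ?thesis .
qed

lemma ps_commute:
  fixes w y :: "'a::{banach,real_normed_algebra_1}"
  assumes "summable (\<lambda>n. \<bar>bc a n\<bar>)" "norm w \<le> 1" "y * w = w * y"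
  shows "y * ps a w = ps a w * y"
proof -
  have pc: "y * w ^ n = w ^ n * y" for n
    by (induction n) (simp_all add: assms(3) mult.assoc[symmetric], simp add: mult.assoc)
  have s: "summable (\<lambda>n. bc a n *\<^sub>R w ^ n)" by (rule ps_summable[OF assms(1,2)])
  have "y * ps a w = (\<Sum>n. y * (bc a n *\<^sub>R w ^ n))" unfolding ps_def by (rule suminf_mult[OF s, symmetric])
  also have "\<dots> = (\<Sum>n. (bc a n *\<^sub>R w ^ n) * y)" by (simp add: pc)
  also have "\<dots> = ps a w * y" unfolding ps_def by (rule suminf_mult2[OF s, symmetric])
  finally show ?thesis .
qed

lemma ps_invol:
  fixes w :: "'a::cstar"
  assumes "summable (\<lambda>n. \<bar>bc a n\<bar>)" "norm w \<le> 1" "invol w = w"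
  shows "invol (ps a w) = ps a w"
proof -
  have s: "summable (\<lambda>n. bc a n *\<^sub>R w ^ n)" by (rule ps_summable[OF assms(1,2)])
  have "invol (ps a w) = (\<Sum>n. invol (bc a n *\<^sub>R w ^ n))"
    unfolding ps_def by (rule bounded_linear.suminf[OF bounded_linear_invol s])
  also have "\<dots> = ps a w" unfolding ps_def by (simp add: invol_power assms(3))
  finally show ?thesis .
qed

lemma bc_half: "summable (\<lambda>n. \<bar>bc (1/2) n\<bar>)" by (rule bc_summable) auto
lemma bc_quarter: "summable (\<lambda>n. \<bar>bc (1/4) n\<bar>)" by (rule bc_summable) auto

lemma ps_half_sq: "norm (w::'a::{banach,real_normed_algebra_1}) \<le> 1 \<Longrightarrow> ps (1/2) w * ps (1/2) w = 1 - w"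
  using ps_mult[OF bc_half bc_half, of w] ps_one[of w] by simp

lemma ps_quarter_sq: "norm (w::'a::{banach,real_normed_algebra_1}) \<le> 1 \<Longrightarrow> ps (1/4) w * ps (1/4) w = ps (1/2) w"
  using ps_mult[OF bc_quarter bc_quarter, of w] by simp

definition inv_el :: "'a::real_normed_algebra_1 \<Rightarrow> bool" where
  "inv_el x \<longleftrightarrow> (\<exists>v. x * v = 1 \<and> v * x = 1)"

lemma inv_el_one: "inv_el 1" unfolding inv_el_def by auto

lemma inv_el_mult: assumes "inv_el x" "inv_el y" shows "inv_el (x * y)"
proof -
  obtain u where u: "x * u = 1" "u * x = 1" using assms(1) unfolding inv_el_def by auto
  obtain v where v: "y * v = 1" "v * y = 1" using assms(2) unfolding inv_el_def by auto
  have "x * y * (v * u) = 1" by (metis mult.assoc mult_1_left u(1) v(1))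
  moreover have "(v * u) * (x * y) = 1" by (metis mult.assoc mult_1_left u(2) v(2))
  ultimately show ?thesis unfolding inv_el_def by auto
qed

lemma inv_el_scaleR: assumes "r \<noteq> 0" "inv_el x" shows "inv_el (r *\<^sub>R x)"
proof -
  obtain u where u: "x * u = 1" "u * x = 1" using assms(2) unfolding inv_el_def by auto
  have "(r *\<^sub>R x) * ((1/r) *\<^sub>R u) = 1" "((1/r) *\<^sub>R u) * (r *\<^sub>R x) = 1" using u assms(1) by auto
  then show ?thesis unfolding inv_el_def by blast
qed

lemma inv_el_cancel: assumes "x * y = 0" "inv_el y" shows "x = 0"
proof -
  obtain v where v: "y * v = 1" using assms(2) unfolding inv_el_def by auto
  have "x = x * y * v" by (simp add: mult.assoc v)
  then show ?thesis using assms(1) by simp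
qed

lemma inv_el_sq: assumes "inv_el (e * e)" shows "inv_el e"
proof -
  obtain v where v: "e * e * v = 1" "v * (e * e) = 1" using assms unfolding inv_el_def by auto
  have l: "(v * e) * e = 1" using v(2) by (simp add: mult.assoc)
  have r: "e * (e * v) = 1" using v(1) by (simp add: mult.assoc)
  have "v * e = (v * e) * (e * (e * v))" using r by simp
  also have "\<dots> = e * v" using l by (metis mult.assoc mult_1_left)
  finally have "e * (v * e) = 1" using r by simp
  with l show ?thesis unfolding inv_el_def by blast
qed

lemma neumann:
  fixes g :: "'a::{banach,real_normed_algebra_1}"
  assumes "norm g < 1"
  shows "inv_el (1 - g)"
proof -
  have s: "summable (\<lambda>n. g ^ n)"
  proof (rule summable_comparison_test[where g="\<lambda>n. norm g ^ n"])
    show "\<exists>N. \<forall>n\<ge>N. norm (g ^ n) \<le> norm g ^ n" using norm_power_ineq by blast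
    show "summable (\<lambda>n. norm g ^ n)" using assms by (intro summable_geometric) simp
  qed
  have lim: "(\<lambda>n. g ^ n) \<longlonglongrightarrow> 0" using assms by (rule LIMSEQ_power_zero)
  have t: "(\<lambda>n. g ^ Suc n - g ^ n) sums (0 - g ^ 0)" by (rule telescope_sums[OF lim])
  have t2: "(\<lambda>n. g ^ n - g ^ Suc n) sums 1"
    using sums_minus[OF t] by simp
  have "(1 - g) * (\<Sum>n. g ^ n) = (\<Sum>n. (1 - g) * g ^ n)" by (rule suminf_mult[OF s, symmetric])
  also have "\<dots> = (\<Sum>n. g ^ n - g ^ Suc n)" by (simp add: algebra_simps)
  also have "\<dots> = 1" using t2 by (simp add: sums_iff)
  finally have 1: "(1 - g) * (\<Sum>n. g ^ n) = 1" .
  have "(\<Sum>n. g ^ n) * (1 - g) = (\<Sum>n. g ^ n * (1 - g))" by (rule suminf_mult2[OF s])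
  also have "\<dots> = (\<Sum>n. g ^ n - g ^ Suc n)" by (simp add: algebra_simps power_commutes)
  also have "\<dots> = 1" using t2 by (simp add: sums_iff)
  finally have 2: "(\<Sum>n. g ^ n) * (1 - g) = 1" .
  from 1 2 show ?thesis unfolding inv_el_def by blast
qed

section \<open>Unitary trick\<close>

lemma cscale_neg_left: "cscale (- c) x = - cscale c (x::'a::cstar)"
proof -
  have "cscale (c + - c) x = cscale c x + cscale (- c) x" by (rule cscale_add_left)
  then have "cscale c x + cscale (- c) x = 0" by (simp only: add.right_inverse cscale_zero_left)
  then show ?thesis by (metis add.commute add_eq_0_iff2 eq_neg_iff_add_eq_0)
qed

lemma unitary_bound:
  fixes c m :: "'a::cstar"
  assumes sc: "invol c = c" and sm: "invol m = m" and cm: "c * m = m * c"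
    and sum: "c * c + m * m = s *\<^sub>R 1" and s0: "0 \<le> s"
  shows "norm c \<le> sqrt s" "norm m \<le> sqrt s"
proof -
  define u where "u = c + cscale \<i> m"
  have iu: "invol u = c - cscale \<i> m"
    unfolding u_def by (simp add: invol_cscale sc sm cscale_neg_left)
  have e1: "c * cscale \<i> m = cscale \<i> (c * m)" by (simp add: cscale_mult_right)
  have e2: "cscale \<i> m * c = cscale \<i> (m * c)" by (simp add: cscale_mult_left)
  have e3: "cscale \<i> m * cscale \<i> m = - (m * m)"
    by (simp add: cscale_mult_both cscale_neg_left cscale_one)
  have "invol u * u = (c - cscale \<i> m) * (c + cscale \<i> m)" using iu u_def by simp
  also have "\<dots> = c * c + c * cscale \<i> m - cscale \<i> m * c - cscale \<i> m * cscale \<i> m"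
    by (simp add: algebra_simps)
  also have "\<dots> = c * c + m * m + (cscale \<i> (c * m) - cscale \<i> (m * c))"
    unfolding e1 e2 e3 by (simp add: algebra_simps)
  also have "\<dots> = s *\<^sub>R 1" using cm sum by simp
  finally have "invol u * u = s *\<^sub>R 1" .
  then have "(norm u)^2 = s" using cstar_identity[of u] s0 by simp
  then have nu: "norm u = sqrt s" by (metis norm_ge_zero real_sqrt_unique)
  have "u + invol u = 2 *\<^sub>R c" using iu u_def by (simp add: scaleR_2)
  then have "c = (1/2) *\<^sub>R (u + invol u)" by simp
  moreover have "norm (u + invol u) \<le> 2 * sqrt s" using norm_triangle_ineq[of u "invol u"] nu by simp
  ultimately show "norm c \<le> sqrt s" by simp
  have i2: "2 * \<i> = \<i> + \<i>" by simp
  have c2: "cscale (2 * \<i>) m = cscale \<i> m + cscale \<i> m" by (simp only: i2 cscale_add_left)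
  have "u - invol u = cscale (2 * \<i>) m" unfolding c2 using iu u_def by simp
  then have "2 * norm m = norm (u - invol u)" by (simp add: norm_cscale)
  also have "\<dots> \<le> norm u + norm (invol u)" by (rule norm_triangle_ineq4)
  finally show "norm m \<le> sqrt s" using nu norm_invol[of u] by linarith
qed

lemma L1:
  fixes c :: "'a::cstar"
  assumes sc: "invol c = c" and nc: "norm c \<le> 1"
  shows "norm (1 - c * c) \<le> 1"
proof -
  define w where "w = c * c"
  have nw: "norm w \<le> 1" unfolding w_def
    using norm_mult_ineq[of c c] mult_le_one[OF nc norm_ge_zero nc] by linarith
  have sw: "invol w = w" unfolding w_def using sc by simp
  define m where "m = ps (1/2) w"
  have sm: "invol m = m" unfolding m_def by (rule ps_invol[OF bc_half nw sw])
  have mm: "m * m = 1 - w" unfolding m_def by (rule ps_half_sq[OF nw])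
  have cm: "c * m = m * c" unfolding m_def
    by (rule ps_commute[OF bc_half nw]) (simp add: w_def mult.assoc)
  have "c * c + m * m = 1 *\<^sub>R 1" using mm by (simp add: w_def)
  from unitary_bound(2)[OF sc sm cm this] have "norm m \<le> 1" by simp
  have "norm (1 - c * c) = (norm m)^2" using mm norm_sa_square[OF sm] by (simp add: w_def)
  also have "\<dots> \<le> 1" using \<open>norm m \<le> 1\<close> by (simp add: power_le_one)
  finally show ?thesis .
qed

lemma L2:
  fixes f :: "'a::cstar"
  assumes sf: "invol f = f"
  shows "inv_el (1 + f * f)"
proof (cases "f = 0")
  case True then show ?thesis by (simp add: inv_el_one)
next
  case False
  define nf where "nf = norm f"
  have nf0: "nf > 0" using False by (simp add: nf_def)
  define q where "q = (1/nf) *\<^sub>R f"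
  have sq: "invol q = q" unfolding q_def using sf by simp
  have nq: "norm q \<le> 1" unfolding q_def nf_def using nf0 by simp
  have L1q: "norm (1 - q * q) \<le> 1" by (rule L1[OF sq nq])
  define L where "L = nf^2 + 1"
  have L0: "L > 0" unfolding L_def using zero_le_power2[of nf] by linarith
  define g where "g = (1/L) *\<^sub>R (nf^2 *\<^sub>R 1 - f * f)"
  have "nf^2 *\<^sub>R 1 - f * f = nf^2 *\<^sub>R (1 - q * q)"
    unfolding q_def using nf0 by (simp add: algebra_simps power2_eq_square)
  then have "norm g = (1/L) * (nf^2 * norm (1 - q * q))" unfolding g_def using L0 by simp
  also have "\<dots> \<le> (1/L) * nf^2" using L1q L0 by (intro mult_left_mono mult_left_le) auto
  also have "\<dots> < 1" using L0 unfolding L_def by (simp add: field_simps)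
  finally have ng: "norm g < 1" .
  have Lg: "L *\<^sub>R g = nf^2 *\<^sub>R 1 - f * f" unfolding g_def using L0 by simp
  have "L *\<^sub>R (1 - g) = L *\<^sub>R 1 - (nf^2 *\<^sub>R 1 - f * f)" by (simp only: scaleR_diff_right Lg)
  also have "\<dots> = (L - nf^2) *\<^sub>R 1 + f * f" by (simp only: scaleR_diff_left diff_diff_eq2 diff_add_eq)
  also have "\<dots> = 1 + f * f" by (simp add: L_def)
  finally have "1 + f * f = L *\<^sub>R (1 - g)" by simp
  then show ?thesis using inv_el_scaleR[OF _ neumann[OF ng]] L0 by simp
qed

lemma sh_add: "star_hom \<sigma> \<Longrightarrow> \<sigma> (x + y) = \<sigma> x + \<sigma> y"
  unfolding star_hom_def clinear_def by blast
lemma sh_cscale: "star_hom \<sigma> \<Longrightarrow> \<sigma> (cscale c x) = cscale c (\<sigma> x)"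
  unfolding star_hom_def clinear_def by blast
lemma sh_mult: "star_hom \<sigma> \<Longrightarrow> \<sigma> (x * y) = \<sigma> x * \<sigma> y"
  unfolding star_hom_def by blast
lemma sh_invol: "star_hom \<sigma> \<Longrightarrow> \<sigma> (invol x) = invol (\<sigma> x)"
  unfolding star_hom_def by blast
lemma sh_0: "star_hom (\<sigma>::'a::cstar \<Rightarrow> 'c::cstar) \<Longrightarrow> \<sigma> 0 = 0"
  using sh_add[of \<sigma> 0 0] by simp
lemma sh_minus: "star_hom (\<sigma>::'a::cstar \<Rightarrow> 'c::cstar) \<Longrightarrow> \<sigma> (- x) = - \<sigma> x"
  using sh_add[of \<sigma> x "-x"] sh_0[of \<sigma>] by (metis add.right_inverse add_eq_0_iff2 eq_neg_iff_add_eq_0)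
lemma sh_diff: "star_hom (\<sigma>::'a::cstar \<Rightarrow> 'c::cstar) \<Longrightarrow> \<sigma> (x - y) = \<sigma> x - \<sigma> y"
  using sh_add[of \<sigma> x "-y"] sh_minus[of \<sigma> y] by simp
lemma sh_scaleR: "star_hom (\<sigma>::'a::cstar \<Rightarrow> 'c::cstar) \<Longrightarrow> \<sigma> (r *\<^sub>R x) = r *\<^sub>R \<sigma> x"
  using sh_cscale[of \<sigma> "complex_of_real r" x] by (simp add: cscale_of_real)

theorem star_hom_norm_ge:
  fixes \<sigma> :: "'a::cstar \<Rightarrow> 'c::cstar"
  assumes ush: "unital_star_hom \<sigma>" and inj: "inj \<sigma>"
  shows "norm a \<le> norm (\<sigma> a)"
proof (rule ccontr)
  assume "\<not> norm a \<le> norm (\<sigma> a)"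
  then have lt: "norm (\<sigma> a) < norm a" by simp
  have sh: "star_hom \<sigma>" and s1: "\<sigma> 1 = 1" using ush unfolding unital_star_hom_def by auto
  define na where "na = norm a"
  have na0: "na > 0" using lt unfolding na_def by (meson norm_ge_zero le_less_trans)
  define c where "c = (1 / na^2) *\<^sub>R (invol a * a)"
  have sc: "invol c = c" unfolding c_def by simp
  have nc: "norm c = 1" unfolding c_def na_def using na0 cstar_identity[of a] by (simp add: na_def)
  have sigc: "\<sigma> c = (1 / na^2) *\<^sub>R (invol (\<sigma> a) * \<sigma> a)"
    unfolding c_def by (simp add: sh_scaleR[OF sh] sh_mult[OF sh] sh_invol[OF sh])
  have "norm (\<sigma> c) = (norm (\<sigma> a))^2 / na^2"
    unfolding sigc using cstar_identity[of "\<sigma> a"] by simp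
  also have "\<dots> < 1" using lt na0 unfolding na_def
    by (simp add: power_strict_mono)
  finally have nsc: "norm (\<sigma> c) < 1" .
  have ssc: "invol (\<sigma> c) = \<sigma> c" using sc sh_invol[OF sh, of c] by simp
  define h where "h = c * c"
  have sigh: "\<sigma> h = \<sigma> c * \<sigma> c" unfolding h_def by (simp add: sh_mult[OF sh])
  define t where "t = norm (\<sigma> h)"
  have t_eq: "t = (norm (\<sigma> c))^2" unfolding t_def sigh by (rule norm_sa_square[OF ssc])
  have t0: "0 \<le> t" and t1: "t < 1" using nsc t_eq by (auto simp: power_less_one_iff abs_square_less_1)
  define s where "s = (t + 1) / 2"
  have s0: "0 < s" and ts: "t < s" and s1': "s < 1" using t0 t1 unfolding s_def by auto
  define k where "k = h - s *\<^sub>R 1"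
  have sk: "invol k = k" unfolding k_def h_def using sc by simp
  have ck: "c * k = k * c" unfolding k_def h_def by (simp add: algebra_simps)
  define M where "M = (norm k)^2 + 1"
  have M0: "M > 0" unfolding M_def using zero_le_power2[of "norm k"] by linarith
  define q where "q = (1 / sqrt M) *\<^sub>R k"
  have sq: "invol q = q" unfolding q_def using sk by simp
  have "norm k < sqrt M" unfolding M_def by (simp add: real_less_rsqrt)
  then have nq: "norm q \<le> 1" unfolding q_def using M0 by (simp add: field_simps)
  have sM: "(1 / sqrt M) * (1 / sqrt M) = 1 / M" using M0 by (simp add: divide_simps)
  have qq: "q * q = (1 / M) *\<^sub>R (k * k)" unfolding q_def
    by (simp only: mult_scaleR_left mult_scaleR_right scaleR_scaleR sM)
  define w where "w = 1 - q * q"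
  have nw: "norm w \<le> 1" unfolding w_def by (rule L1[OF sq nq])
  have sw: "invol w = w" unfolding w_def using sq by simp
  have cq: "c * q = q * c" unfolding q_def using ck by simp
  have cw: "c * w = w * c" unfolding w_def
    by (simp add: right_diff_distrib left_diff_distrib) (metis cq mult.assoc)
  define tt where "tt = ps (1/4) w"
  have stt: "invol tt = tt" unfolding tt_def by (rule ps_invol[OF bc_quarter nw sw])
  have ctt: "c * tt = tt * c" unfolding tt_def by (rule ps_commute[OF bc_quarter nw cw])
  have "(tt * tt) * (tt * tt) = 1 - w"
    unfolding tt_def using ps_quarter_sq[OF nw] ps_half_sq[OF nw] by simp
  then have tt4: "(tt * tt) * (tt * tt) = q * q" by (simp add: w_def)
  define b where "b = sqrt (sqrt M) *\<^sub>R tt"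
  have sb: "invol b = b" unfolding b_def using stt by simp
  have cb: "c * b = b * c" unfolding b_def using ctt by simp
  define r where "r = b * b"
  have rr: "r * r = k * k"
  proof -
    have x2: "sqrt (sqrt M) * sqrt (sqrt M) = sqrt M" using M0 by simp
    have x1: "sqrt M * sqrt M = M" using M0 by simp
    have "r * r = ((sqrt (sqrt M) * sqrt (sqrt M)) * (sqrt (sqrt M) * sqrt (sqrt M))) *\<^sub>R ((tt * tt) * (tt * tt))"
      unfolding r_def b_def by (simp only: mult_scaleR_left mult_scaleR_right scaleR_scaleR mult.assoc)
    also have "\<dots> = M *\<^sub>R (q * q)" by (simp only: x2 x1 tt4)
    also have "\<dots> = k * k" using qq M0 by simp
    finally show ?thesis .
  qed
  have hb: "h * b = b * h" unfolding h_def by (metis cb mult.assoc)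
  have rh: "r * h = h * r" unfolding r_def by (metis hb mult.assoc)
  have rk: "r * k = k * r" unfolding k_def
    by (simp add: right_diff_distrib left_diff_distrib rh)
  define p where "p = r + k"
  define n where "n = r - k"
  have pn: "p * n = 0" unfolding p_def n_def by (simp add: algebra_simps rk rr)
  have spn: "\<sigma> p * \<sigma> n = 0" using pn sh_mult[OF sh, of p n] sh_0[OF sh] by simp
  define \<beta> where "\<beta> = \<sigma> b"
  have sbeta: "invol \<beta> = \<beta>" unfolding \<beta>_def using sb sh_invol[OF sh, of b] by simp
  have bh: "\<beta> * \<sigma> h = \<sigma> h * \<beta>" unfolding \<beta>_def using hb sh_mult[OF sh] by metis
  have sign: "\<sigma> n = \<beta> * \<beta> - \<sigma> h + s *\<^sub>R 1"
    unfolding n_def r_def k_def \<beta>_def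
    by (simp add: sh_diff[OF sh] sh_mult[OF sh] sh_scaleR[OF sh] s1)
  define g where "g = (1 / s) *\<^sub>R \<sigma> h"
  have ng: "norm g < 1" unfolding g_def using s0 ts t0 by (simp add: t_def[symmetric] field_simps)
  have sg: "invol g = g" unfolding g_def sigh using ssc by simp
  have bg: "\<beta> * g = g * \<beta>" unfolding g_def using bh by simp
  define e where "e = ps (1/2) g"
  have ng1: "norm g \<le> 1" using ng by simp
  have se: "invol e = e" unfolding e_def by (rule ps_invol[OF bc_half ng1 sg])
  have ee: "e * e = 1 - g" unfolding e_def by (rule ps_half_sq[OF ng1])
  have be: "\<beta> * e = e * \<beta>" unfolding e_def by (rule ps_commute[OF bc_half ng1 bg])
  have inve: "inv_el e" by (rule inv_el_sq) (simp add: ee neumann[OF ng])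
  then obtain v where ev: "e * v = 1" and ve: "v * e = 1" unfolding inv_el_def by auto
  have bv: "\<beta> * v = v * \<beta>"
  proof -
    have "\<beta> * v = (v * e) * \<beta> * v" using ve by simp
    also have "\<dots> = v * (\<beta> * e) * v" using be by (simp add: mult.assoc)
    also have "\<dots> = v * \<beta>" using ev by (simp add: mult.assoc)
    finally show ?thesis .
  qed
  have sv: "invol v = v"
  proof -
    have "invol v * e = 1" using ev se by (metis invol_mult_simp invol_one)
    have "invol v = invol v * (e * v)" using ev by simp
    also have "\<dots> = (invol v * e) * v" by (simp only: mult.assoc)
    also have "\<dots> = v" using \<open>invol v * e = 1\<close> by simp
    finally show ?thesis .
  qed
  define f where "f = (1 / sqrt s) *\<^sub>R (v * \<beta>)"
  have sf: "invol f = f" unfolding f_def using sv sbeta bv by simp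
  have inv1: "inv_el (1 + f * f)" by (rule L2[OF sf])
  have "e * (f * f) * e = (1 / s) *\<^sub>R (e * v * \<beta> * (v * \<beta> * e))"
  proof -
    have x: "(1 / sqrt s) * (1 / sqrt s) = 1 / s" using s0 by (simp add: divide_simps)
    show ?thesis unfolding f_def
      by (simp only: mult_scaleR_left mult_scaleR_right scaleR_scaleR mult.assoc x)
  qed
  also have "\<dots> = (1 / s) *\<^sub>R (\<beta> * \<beta>)"
  proof -
    have "v * \<beta> * e = \<beta>" using bv ve by (metis mult.assoc mult_1_right)
    then show ?thesis using ev by simp
  qed
  finally have eff: "e * (f * f) * e = (1 / s) *\<^sub>R (\<beta> * \<beta>)" .
  have "s *\<^sub>R (e * (1 + f * f) * e) = s *\<^sub>R (e * e) + s *\<^sub>R (e * (f * f) * e)"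
    by (simp add: algebra_simps)
  also have "\<dots> = \<sigma> n"
    unfolding eff ee sign g_def using s0 by (simp add: algebra_simps)
  finally have "\<sigma> n = s *\<^sub>R (e * (1 + f * f) * e)" by simp
  then have "inv_el (\<sigma> n)"
    using inv_el_scaleR[OF _ inv_el_mult[OF inv_el_mult[OF inve inv1] inve]] s0 by simp
  then have "\<sigma> p = 0" using spn inv_el_cancel by blast
  then have "p = 0" using inj sh_0[OF sh] by (metis injD)
  then have "c * c + b * b = s *\<^sub>R 1" unfolding p_def r_def k_def h_def
    by (simp add: algebra_simps eq_neg_iff_add_eq_0)
  from unitary_bound(1)[OF sc sb cb this] s0 have "norm c \<le> sqrt s" by simp
  moreover have "sqrt s < 1" using s1' s0 by simp
  ultimately show False using nc by simp
qed

definition addG :: "'g::ab_group_add monoid" where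
  "addG = \<lparr>carrier = UNIV, monoid.mult = (+), one = 0\<rparr>"

lemma comm_group_addG: "comm_group (addG :: 'g::ab_group_add monoid)"
proof (rule comm_groupI)
  fix x :: 'g
  show "\<exists>y\<in>carrier addG. y \<otimes>\<^bsub>addG\<^esub> x = \<one>\<^bsub>addG\<^esub>"
    by (rule bexI[of _ "- x"]) (simp_all add: addG_def)
qed (simp_all add: addG_def add.assoc add.commute)

definition zmul :: "int \<Rightarrow> 'g::ab_group_add \<Rightarrow> 'g" where
  "zmul k y = y [^]\<^bsub>addG\<^esub> k"

lemma inv_addG: "inv\<^bsub>addG\<^esub> (y::'g::ab_group_add) = - y"
proof -
  interpret comm_group "addG :: 'g monoid" by (rule comm_group_addG)
  show ?thesis by (rule inv_equality) (auto simp: addG_def)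
qed

lemma zmul_add: "zmul (k + l) y = zmul k y + zmul l (y::'g::ab_group_add)"
proof -
  interpret comm_group "addG :: 'g monoid" by (rule comm_group_addG)
  show ?thesis unfolding zmul_def using int_pow_mult[of y k l] by (simp add: addG_def)
qed

lemma zmul_distrib: "zmul k (a + b) = zmul k a + zmul k (b::'g::ab_group_add)"
proof -
  interpret comm_group "addG :: 'g monoid" by (rule comm_group_addG)
  show ?thesis unfolding zmul_def using int_pow_distrib[of a b k] by (simp add: addG_def)
qed

lemma zmul_zmul: "zmul k (zmul l y) = zmul (l * k) (y::'g::ab_group_add)"
proof -
  interpret comm_group "addG :: 'g monoid" by (rule comm_group_addG)
  show ?thesis unfolding zmul_def using int_pow_pow[of y l k] by (simp add: addG_def)
qed

lemma zmul_0 [simp]: "zmul 0 (y::'g::ab_group_add) = 0"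
  unfolding zmul_def by (simp add: addG_def)

lemma zmul_1 [simp]: "zmul 1 (y::'g::ab_group_add) = y"
proof -
  interpret comm_group "addG :: 'g monoid" by (rule comm_group_addG)
  have "y [^]\<^bsub>addG\<^esub> (1::int) = y" by (rule int_pow_1) (simp add: addG_def)
  then show ?thesis unfolding zmul_def .
qed

lemma zmul_neg: "zmul (- k) y = - zmul k (y::'g::ab_group_add)"
proof -
  interpret comm_group "addG :: 'g monoid" by (rule comm_group_addG)
  show ?thesis unfolding zmul_def using int_pow_neg[of y k] inv_addG by (simp add: addG_def)
qed

lemma zmul_diff: "zmul (k - l) y = zmul k y - zmul l (y::'g::ab_group_add)"
  using zmul_add[of k "-l" y] zmul_neg[of l y] by simp

lemma zmul_zero_right [simp]: "zmul k (0::'g::ab_group_add) = 0"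
  using zmul_distrib[of k 0 0] by simp

lemma zmul_nat_pos: assumes "0 < (x::'g::linordered_ab_group_add)" shows "0 < zmul (int (Suc n)) x"
proof (induction n)
  case 0 then show ?case using assms by simp
next
  case (Suc n)
  have e: "int (Suc (Suc n)) = int (Suc n) + 1" by simp
  have "zmul (int (Suc (Suc n))) x = zmul (int (Suc n)) x + zmul 1 x"
    unfolding e by (rule zmul_add)
  then show ?case using add_pos_pos[OF Suc.IH assms] by simp
qed

lemma zmul_eq0: assumes "0 < (x::'g::linordered_ab_group_add)" "zmul k x = 0" shows "k = 0"
proof (rule ccontr)
  assume "k \<noteq> 0"
  then consider "0 < k" | "k < 0" by linarith
  then show False
  proof cases
    case 1
    then have "k = int (Suc (nat (k - 1)))" by simp
    then obtain n where "k = int (Suc n)" by blast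
    then show False using zmul_nat_pos[OF assms(1), of n] assms(2) by simp
  next
    case 2
    then have "- k = int (Suc (nat (- k - 1)))" by simp
    then obtain n where "- k = int (Suc n)" by blast
    then have "0 < zmul (- k) x" using zmul_nat_pos[OF assms(1), of n] by simp
    then show False using assms(2) zmul_neg[of k x] by simp
  qed
qed

section \<open>Extension of homomorphisms into the reals (Zorn)\<close>

definition PH :: "'g::ab_group_add \<Rightarrow> ('g \<times> real) set set" where
  "PH x = {R. (x, 1) \<in> R \<and> (0, 0) \<in> R
     \<and> (\<forall>a u b v. (a, u) \<in> R \<longrightarrow> (b, v) \<in> R \<longrightarrow> (a - b, u - v) \<in> R)
     \<and> (\<forall>a u v. (a, u) \<in> R \<longrightarrow> (a, v) \<in> R \<longrightarrow> u = v)}"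

lemma PH_diff: "R \<in> PH x \<Longrightarrow> (a, u) \<in> R \<Longrightarrow> (b, v) \<in> R \<Longrightarrow> (a - b, u - v) \<in> R"
  unfolding PH_def by blast

lemma PH_sv: "R \<in> PH x \<Longrightarrow> (a, u) \<in> R \<Longrightarrow> (a, v) \<in> R \<Longrightarrow> u = v"
  unfolding PH_def by blast

lemma PH_0: "R \<in> PH x \<Longrightarrow> (0, 0) \<in> R"
  unfolding PH_def by blast

lemma PH_x: "R \<in> PH x \<Longrightarrow> (x, 1) \<in> R"
  unfolding PH_def by blast

lemma PH_neg: "R \<in> PH x \<Longrightarrow> (a, u) \<in> R \<Longrightarrow> (- a, - u) \<in> R"
  using PH_diff[of R x 0 0 a u] PH_0[of R x] by simp

lemma PH_add: "R \<in> PH x \<Longrightarrow> (a, u) \<in> R \<Longrightarrow> (b, v) \<in> R \<Longrightarrow> (a + b, u + v) \<in> R"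
  using PH_diff[of R x a u "- b" "- v"] PH_neg[of R x b v] by simp

lemma PH_zmul:
  assumes R: "R \<in> PH x" and au: "(a, u) \<in> R"
  shows "(zmul q a, of_int q * u) \<in> R"
proof (induction q rule: int_induct[where k=0])
  case base then show ?case using PH_0[OF R] by simp
next
  case (step1 i)
  have "(zmul i a + a, of_int i * u + u) \<in> R" by (rule PH_add[OF R step1(2) au])
  moreover have "zmul (i + 1) a = zmul i a + a" by (simp add: zmul_add)
  moreover have "of_int (i + 1) * u = of_int i * u + u" by (simp add: algebra_simps)
  ultimately show ?case by simp
next
  case (step2 i)
  have "(zmul i a - a, of_int i * u - u) \<in> R" by (rule PH_diff[OF R step2(2) au])
  moreover have "zmul (i - 1) a = zmul i a - a" by (simp add: zmul_diff)
  moreover have "of_int (i - 1) * u = of_int i * u - u" by (simp add: algebra_simps)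
  ultimately show ?case by simp
qed

lemma R0_PH:
  assumes x: "0 < (x::'g::linordered_ab_group_add)"
  shows "{(zmul k x, of_int k) | k. True} \<in> PH x"
proof -
  define R0 where "R0 = {(zmul k x, (of_int k :: real)) | k. True}"
  have m: "p \<in> R0 \<longleftrightarrow> (\<exists>k. p = (zmul k x, of_int k))" for p unfolding R0_def by blast
  have 1: "(x, 1) \<in> R0" unfolding m by (rule exI[of _ 1]) simp
  have 2: "(0, 0) \<in> R0" unfolding m by (rule exI[of _ 0]) simp
  have 3: "(a - b, u - v) \<in> R0" if hh: "(a, u) \<in> R0" "(b, v) \<in> R0" for a u b v
  proof -
    obtain k where k: "(a, u) = (zmul k x, of_int k)" using hh(1)[unfolded m] by blast
    obtain l where l: "(b, v) = (zmul l x, of_int l)" using hh(2)[unfolded m] by blast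
    from k l have "a = zmul k x" "u = of_int k" "b = zmul l x" "v = of_int l" by auto
    then show ?thesis unfolding m by (intro exI[of _ "k - l"]) (simp add: zmul_diff)
  qed
  have 4: "u = v" if hh: "(a, u) \<in> R0" "(a, v) \<in> R0" for a u v
  proof -
    obtain k where k: "(a, u) = (zmul k x, of_int k)" using hh(1)[unfolded m] by blast
    obtain l where l: "(a, v) = (zmul l x, of_int l)" using hh(2)[unfolded m] by blast
    from k l have kl: "a = zmul k x" "u = of_int k" "a = zmul l x" "v = of_int l" by auto
    then have "zmul (k - l) x = 0" by (simp add: zmul_diff)
    then have "k - l = 0" by (rule zmul_eq0[OF x])
    then show "u = v" using kl by simp
  qed
  have "R0 \<in> PH x" unfolding PH_def using 1 2 3 4 by blast
  then show ?thesis unfolding R0_def .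
qed

lemma chain_PH:
  assumes x: "0 < (x::'g::linordered_ab_group_add)" and C: "C \<in> chains (PH x)"
  shows "\<exists>U\<in>PH x. \<forall>X\<in>C. X \<subseteq> U"
proof (cases "C = {}")
  case True then show ?thesis using R0_PH[OF x] by blast
next
  case False
  have CP: "C \<subseteq> PH x" using C unfolding chains_def by blast
  have cmp: "X \<subseteq> Y \<or> Y \<subseteq> X" if "X \<in> C" "Y \<in> C" for X Y
    using C that unfolding chains_def chain_subset_def by blast
  have "\<Union>C \<in> PH x"
    unfolding PH_def
  proof (intro CollectI conjI allI impI)
    obtain X where X: "X \<in> C" using False by blast
    then show "(x, 1) \<in> \<Union>C" "(0, 0) \<in> \<Union>C" using CP PH_x PH_0 by blast+
  next
    fix a u b v assume "(a, u) \<in> \<Union>C" "(b, v) \<in> \<Union>C"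
    then obtain X Y where XY: "X \<in> C" "Y \<in> C" "(a, u) \<in> X" "(b, v) \<in> Y" by blast
    from cmp[OF XY(1,2)] show "(a - b, u - v) \<in> \<Union>C"
    proof
      assume "X \<subseteq> Y" then show ?thesis using XY CP PH_diff by blast
    next
      assume "Y \<subseteq> X" then show ?thesis using XY CP PH_diff by blast
    qed
  next
    fix a u v assume "(a, u) \<in> \<Union>C" "(a, v) \<in> \<Union>C"
    then obtain X Y where XY: "X \<in> C" "Y \<in> C" "(a, u) \<in> X" "(a, v) \<in> Y" by blast
    from cmp[OF XY(1,2)] show "u = v"
    proof
      assume "X \<subseteq> Y" then show ?thesis using XY CP PH_sv by blast
    next
      assume "Y \<subseteq> X" then show ?thesis using XY CP PH_sv by blast
    qed
  qed
  then show ?thesis by blast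
qed

lemma PH_extend:
  assumes x: "0 < (x::'g::linordered_ab_group_add)" and M: "M \<in> PH x" and y: "y \<notin> Domain M"
  shows "\<exists>M'\<in>PH x. M \<subseteq> M' \<and> M' \<noteq> M"
proof -
  define I where "I = {k::int. zmul k y \<in> Domain M}"
  have key: "\<exists>t. \<forall>m u. (zmul m y, u) \<in> M \<longrightarrow> u = of_int m * t"
  proof (cases "\<exists>n::nat. 0 < n \<and> int n \<in> I")
    case True
    define n0 where "n0 = (LEAST n::nat. 0 < n \<and> int n \<in> I)"
    have n0: "0 < n0" "int n0 \<in> I" using LeastI_ex[OF True] unfolding n0_def by auto
    have n0min: "n0 \<le> n" if "0 < n" "int n \<in> I" for n
      unfolding n0_def by (rule Least_le) (use that in auto)
    obtain u0 where u0: "(zmul (int n0) y, u0) \<in> M" using n0(2) unfolding I_def by auto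
    show ?thesis
    proof (intro exI allI impI)
      fix m u assume mu: "(zmul m y, u) \<in> M"
      define q where "q = m div int n0"
      define r where "r = m mod int n0"
      have mqr: "m = q * int n0 + r" unfolding q_def r_def by simp
      have r0: "0 \<le> r" "r < int n0" unfolding r_def using n0(1) by auto
      have zq: "zmul q (zmul (int n0) y) = zmul (q * int n0) y" by (simp add: zmul_zmul mult.commute)
      have qm: "(zmul q (zmul (int n0) y), of_int q * u0) \<in> M" by (rule PH_zmul[OF M u0])
      have "(zmul m y - zmul q (zmul (int n0) y), u - of_int q * u0) \<in> M"
        by (rule PH_diff[OF M mu qm])
      moreover have "zmul m y - zmul q (zmul (int n0) y) = zmul r y"
        unfolding zq by (simp add: mqr zmul_add)
      ultimately have rI: "r \<in> I" unfolding I_def by auto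
      have "r = 0"
      proof (rule ccontr)
        assume "r \<noteq> 0"
        then have "0 < nat r" "int (nat r) \<in> I" using r0 rI by auto
        then have "n0 \<le> nat r" by (rule n0min)
        then show False using r0 by linarith
      qed
      then have "zmul m y = zmul q (zmul (int n0) y)" using zq mqr by simp
      then have "u = of_int q * u0" using PH_sv[OF M] mu qm by metis
      also have "\<dots> = of_int m * (u0 / real n0)" using n0(1) \<open>r = 0\<close> mqr by (simp add: field_simps)
      finally show "u = of_int m * (u0 / real n0)" .
    qed
  next
    case False
    show ?thesis
    proof (intro exI allI impI)
      fix m u assume mu: "(zmul m y, u) \<in> M"
      have "m = 0"
      proof (rule ccontr)
        assume "m \<noteq> 0"
        then consider "0 < m" | "m < 0" by linarith
        then show False
        proof cases
          case 1
          then have "0 < nat m" "int (nat m) \<in> I" using mu unfolding I_def by auto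
          then show False using False by blast
        next
          case 2
          have "(- zmul m y, - u) \<in> M" by (rule PH_neg[OF M mu])
          then have "zmul (- m) y \<in> Domain M" by (auto simp: zmul_neg)
          then have "0 < nat (- m)" "int (nat (- m)) \<in> I" using 2 unfolding I_def by auto
          then show False using False by blast
        qed
      qed
      then have "(0, u) \<in> M" using mu by simp
      then have "u = 0" using PH_sv[OF M _ PH_0[OF M]] by blast
      then show "u = of_int m * 0" by simp
    qed
  qed
  then obtain t where t: "\<And>m u. (zmul m y, u) \<in> M \<Longrightarrow> u = of_int m * t" by blast
  define M' where "M' = {(a + zmul k y, u + of_int k * t) | a u k. (a, u) \<in> M}"
  have mem: "p \<in> M' \<longleftrightarrow> (\<exists>a u k. p = (a + zmul k y, u + of_int k * t) \<and> (a, u) \<in> M)" for p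
    unfolding M'_def by blast
  have sub: "M \<subseteq> M'"
  proof
    fix p assume "p \<in> M"
    then obtain a u where "p = (a, u)" "(a, u) \<in> M" by (cases p) auto
    then show "p \<in> M'" unfolding mem by (intro exI[of _ a] exI[of _ u] exI[of _ 0]) simp
  qed
  have yM': "(y, t) \<in> M'" unfolding mem
    by (intro exI[of _ 0] exI[of _ 0] exI[of _ 1]) (simp add: PH_0[OF M])
  have neq: "M' \<noteq> M" using yM' y by auto
  have "M' \<in> PH x"
  proof -
    have 1: "(x, 1) \<in> M'" using sub PH_x[OF M] by blast
    have 2: "(0, 0) \<in> M'" using sub PH_0[OF M] by blast
    have 3: "(a - b, u - v) \<in> M'" if hh: "(a, u) \<in> M'" "(b, v) \<in> M'" for a u b v
    proof -
      obtain a1 u1 k where A: "(a, u) = (a1 + zmul k y, u1 + of_int k * t)" "(a1, u1) \<in> M"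
        using hh(1) unfolding mem by blast
      obtain b1 v1 l where B: "(b, v) = (b1 + zmul l y, v1 + of_int l * t)" "(b1, v1) \<in> M"
        using hh(2) unfolding mem by blast
      have d: "(a1 - b1, u1 - v1) \<in> M" by (rule PH_diff[OF M A(2) B(2)])
      have "a - b = (a1 - b1) + zmul (k - l) y" using A(1) B(1) by (simp add: zmul_diff algebra_simps)
      moreover have "u - v = (u1 - v1) + of_int (k - l) * t" using A(1) B(1) by (simp add: algebra_simps)
      ultimately show ?thesis unfolding mem using d by blast
    qed
    have 4: "u = v" if hh: "(a, u) \<in> M'" "(a, v) \<in> M'" for a u v
    proof -
      obtain a1 u1 k where A: "(a, u) = (a1 + zmul k y, u1 + of_int k * t)" "(a1, u1) \<in> M"
        using hh(1) unfolding mem by blast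
      obtain b1 v1 l where B: "(a, v) = (b1 + zmul l y, v1 + of_int l * t)" "(b1, v1) \<in> M"
        using hh(2) unfolding mem by blast
      have d: "(b1 - a1, v1 - u1) \<in> M" by (rule PH_diff[OF M B(2) A(2)])
      have "zmul (k - l) y = b1 - a1" using A(1) B(1) by (simp add: zmul_diff algebra_simps)
      then have "(zmul (k - l) y, v1 - u1) \<in> M" using d by simp
      then have "v1 - u1 = of_int (k - l) * t" by (rule t)
      then show ?thesis using A(1) B(1) by (simp add: algebra_simps)
    qed
    show ?thesis unfolding PH_def using 1 2 3 4 by blast
  qed
  then show ?thesis using sub neq by blast
qed

theorem exists_real_hom:
  assumes x: "0 < (x::'g::linordered_ab_group_add)"
  shows "\<exists>\<phi>::'g \<Rightarrow> real. (\<forall>a b. \<phi> (a + b) = \<phi> a + \<phi> b) \<and> \<phi> x = 1"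
proof -
  have "\<forall>C\<in>chains (PH x). \<exists>U\<in>PH x. \<forall>X\<in>C. X \<subseteq> U" using chain_PH[OF x] by blast
  from Zorn_Lemma2[OF this] obtain M where M: "M \<in> PH x" and max: "\<forall>X\<in>PH x. M \<subseteq> X \<longrightarrow> X = M"
    by blast
  have dom: "a \<in> Domain M" for a
  proof (rule ccontr)
    assume "a \<notin> Domain M"
    from PH_extend[OF x M this] max show False by blast
  qed
  define \<phi> where "\<phi> a = (THE u. (a, u) \<in> M)" for a
  have phi: "(a, \<phi> a) \<in> M" for a
  proof -
    obtain u where u: "(a, u) \<in> M" using dom[of a] by auto
    have "\<phi> a = u" unfolding \<phi>_def
    proof (rule the_equality)
      show "(a, u) \<in> M" by (rule u)
      fix v assume "(a, v) \<in> M"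
      then show "v = u" using PH_sv[OF M u] by simp
    qed
    then show ?thesis using u by simp
  qed
  have "\<phi> (a + b) = \<phi> a + \<phi> b" for a b
    using PH_sv[OF M phi PH_add[OF M phi phi]] .
  moreover have "\<phi> x = 1" using PH_sv[OF M phi PH_x[OF M]] .
  ultimately show ?thesis by blast
qed

section \<open>Characters and twisted representations\<close>

definition chars :: "('g::ab_group_add \<Rightarrow> complex) set" where
  "chars = {ka. (\<forall>a b. ka (a + b) = ka a * ka b) \<and> (\<forall>a. cmod (ka a) = 1)}"

lemma chars_mult: "ka (a + b) = ka a * ka b" if "ka \<in> chars" using that unfolding chars_def by blast
lemma chars_norm: "cmod (ka a) = 1" if "ka \<in> chars" using that unfolding chars_def by blast

lemma chars_cnj_mult: "ka \<in> chars \<Longrightarrow> ka a * cnj (ka a) = 1"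
  using complex_norm_square[of "ka a"] chars_norm[of ka a] by simp

lemma chars_one: "(\<lambda>y. 1) \<in> chars" unfolding chars_def by simp

lemma chars_prod_pow: assumes "ka \<in> chars" "ka0 \<in> chars" shows "(\<lambda>y. ka y * ka0 y ^ j) \<in> chars"
  using assms unfolding chars_def by (simp add: power_mult_distrib norm_mult norm_power)

lemma chars_sep:
  assumes x: "0 < (x::'g::linordered_ab_group_add)"
  shows "\<exists>ka\<in>chars. ka x \<noteq> 1"
proof -
  obtain \<phi> :: "'g \<Rightarrow> real" where add: "\<And>a b. \<phi> (a + b) = \<phi> a + \<phi> b" and px: "\<phi> x = 1"
    using exists_real_hom[OF x] by blast
  define ka where "ka y = exp (\<i> * complex_of_real (pi * \<phi> y))" for y
  have m: "ka (a + b) = ka a * ka b" for a b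
  proof -
    have e: "\<i> * complex_of_real (pi * \<phi> (a + b)) = \<i> * complex_of_real (pi * \<phi> a) + \<i> * complex_of_real (pi * \<phi> b)"
      by (simp only: add distrib_left of_real_add)
    show ?thesis by (simp only: ka_def e exp_add)
  qed
  have nm: "cmod (ka a) = 1" for a unfolding ka_def by (rule norm_exp_i_times)
  have "ka \<in> chars" unfolding chars_def using m nm by blast
  moreover have "ka x = -1" unfolding ka_def px using exp_pi_i' by simp
  ultimately show ?thesis by (intro bexI[of _ ka]) simp_all
qed

definition twist :: "('g \<Rightarrow> complex) \<Rightarrow> ('g \<Rightarrow> 'c::cstar) \<Rightarrow> 'g \<Rightarrow> 'c" where
  "twist ka W x = cscale (ka x) (W x)"

lemma twist_cp_rep:
  fixes V H :: "'g::linordered_ab_group_add \<Rightarrow> 'a::cstar \<Rightarrow> 'a" and W :: "'g \<Rightarrow> 'c::cstar"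
    and \<rho> :: "'a \<Rightarrow> 'c"
  assumes cp: "cp_rep V H \<rho> W" and ch: "ka \<in> chars"
  shows "cp_rep V H \<rho> (twist ka W)"
proof -
  have one: "cnj (ka x) * ka x = 1" for x using chars_cnj_mult[OF ch, of x] by (simp add: mult.commute)
  have one': "ka x * cnj (ka x) = 1" for x using chars_cnj_mult[OF ch, of x] by simp
  have it: "invol (twist ka W x) = cscale (cnj (ka x)) (invol (W x))" for x
    unfolding twist_def by (simp add: invol_cscale)
  show ?thesis unfolding cp_rep_def
  proof (intro conjI allI impI)
    show "unital_star_hom \<rho>" using cp unfolding cp_rep_def by blast
  next
    fix x y :: 'g assume "0 \<le> x" "0 \<le> y"
    then have "W (x + y) = W x * W y" using cp unfolding cp_rep_def by blast
    then show "twist ka W (x + y) = twist ka W x * twist ka W y"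
      unfolding twist_def by (simp add: cscale_mult_both chars_mult[OF ch])
  next
    fix x :: 'g assume "0 \<le> x"
    then have "partial_isometry (W x)" using cp unfolding cp_rep_def by blast
    then show "partial_isometry (twist ka W x)"
      unfolding partial_isometry_def it unfolding twist_def
      by (simp add: cscale_mult_both one')
  next
    fix x :: 'g and a assume "0 \<le> x"
    then have "\<rho> (V x a) = W x * \<rho> a * invol (W x)" using cp unfolding cp_rep_def by blast
    moreover have "twist ka W x * \<rho> a * invol (twist ka W x) = W x * \<rho> a * invol (W x)"
    proof -
      have "cscale (ka x) (W x) * \<rho> a = cscale (ka x) (W x * \<rho> a)" by (simp add: cscale_mult_left)
      then show ?thesis unfolding it unfolding twist_def by (simp add: cscale_mult_both one' cscale_one)
    qed
    ultimately show "\<rho> (V x a) = twist ka W x * \<rho> a * invol (twist ka W x)" by simp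
  next
    fix x :: 'g and a assume "0 \<le> x"
    then have "\<rho> (H x a) = invol (W x) * \<rho> a * W x" using cp unfolding cp_rep_def by blast
    moreover have "invol (twist ka W x) * \<rho> a * twist ka W x = invol (W x) * \<rho> a * W x"
    proof -
      have "cscale (cnj (ka x)) (invol (W x)) * \<rho> a = cscale (cnj (ka x)) (invol (W x) * \<rho> a)"
        by (simp add: cscale_mult_left)
      then show ?thesis unfolding it unfolding twist_def by (simp add: cscale_mult_both one cscale_one)
    qed
    ultimately show "\<rho> (H x a) = invol (twist ka W x) * \<rho> a * twist ka W x" by simp
  qed
qed

lemma chars_zero: assumes "ka \<in> chars" shows "ka 0 = 1"
proof -
  have "ka 0 = ka 0 * ka 0" using chars_mult[OF assms, of 0 0] by simp
  moreover have "ka 0 \<noteq> 0" using chars_norm[OF assms, of 0] by auto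
  ultimately show ?thesis by (metis mult_cancel_left1)
qed

lemma mono_neg_twist:
  fixes \<rho> :: "'a::cstar \<Rightarrow> 'c::cstar" and W :: "'g::ab_group_add \<Rightarrow> 'c"
  assumes ch: "ka \<in> chars"
  shows "mono_neg \<rho> (twist ka W) m = cscale (cnj (ka (sum_list (map snd m)))) (mono_neg \<rho> W m)"
proof (induction m)
  case Nil then show ?case by (simp add: mono_neg_def chars_zero[OF ch] cscale_one)
next
  case (Cons p m)
  obtain a x where p: "p = (a, x)" by (cases p)
  have e: "mono_neg \<rho> W' (p # m) = \<rho> a * invol (W' x) * mono_neg \<rho> W' m" for W'
    unfolding p mono_neg_def by simp
  have "mono_neg \<rho> (twist ka W) (p # m)
      = \<rho> a * cscale (cnj (ka x)) (invol (W x)) * cscale (cnj (ka (sum_list (map snd m)))) (mono_neg \<rho> W m)"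
    unfolding e Cons.IH by (simp add: twist_def invol_cscale)
  also have "\<dots> = cscale (cnj (ka x) * cnj (ka (sum_list (map snd m)))) (\<rho> a * invol (W x) * mono_neg \<rho> W m)"
  proof -
    have "\<rho> a * cscale (cnj (ka x)) (invol (W x)) = cscale (cnj (ka x)) (\<rho> a * invol (W x))"
      by (simp add: cscale_mult_right)
    then show ?thesis by (simp only: cscale_mult_both)
  qed
  also have "\<dots> = cscale (cnj (ka (sum_list (map snd (p # m))))) (mono_neg \<rho> W (p # m))"
    unfolding e by (simp add: p chars_mult[OF ch])
  finally show ?case .
qed

lemma mono_pos_twist:
  fixes \<rho> :: "'a::cstar \<Rightarrow> 'c::cstar" and W :: "'g::ab_group_add \<Rightarrow> 'c"
  assumes ch: "ka \<in> chars"
  shows "mono_pos \<rho> (twist ka W) m = cscale (ka (sum_list (map snd m))) (mono_pos \<rho> W m)"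
proof (induction m)
  case Nil then show ?case by (simp add: mono_pos_def chars_zero[OF ch] cscale_one)
next
  case (Cons p m)
  obtain a x where p: "p = (a, x)" by (cases p)
  have e: "mono_pos \<rho> W' (p # m) = \<rho> a * W' x * mono_pos \<rho> W' m" for W'
    unfolding p mono_pos_def by simp
  have "mono_pos \<rho> (twist ka W) (p # m)
      = \<rho> a * cscale (ka x) (W x) * cscale (ka (sum_list (map snd m))) (mono_pos \<rho> W m)"
    unfolding e Cons.IH by (simp add: twist_def)
  also have "\<dots> = cscale (ka x * ka (sum_list (map snd m))) (\<rho> a * W x * mono_pos \<rho> W m)"
  proof -
    have "\<rho> a * cscale (ka x) (W x) = cscale (ka x) (\<rho> a * W x)"
      by (simp add: cscale_mult_right)
    then show ?thesis by (simp only: cscale_mult_both)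
  qed
  also have "\<dots> = cscale (ka (sum_list (map snd (p # m)))) (mono_pos \<rho> W (p # m))"
    unfolding e by (simp add: p chars_mult[OF ch])
  finally show ?case .
qed

lemma qm_neg_twist:
  fixes \<rho> :: "'a::cstar \<Rightarrow> 'c::cstar" and W :: "'g::linordered_ab_group_add \<Rightarrow> 'c"
  assumes ch: "ka \<in> chars" and q: "quasi_mono d q"
  shows "qm_neg \<rho> (twist ka W) q = cscale (cnj (ka d)) (qm_neg \<rho> W q)"
proof -
  have eq: "map (mono_neg \<rho> (twist ka W)) q = map (\<lambda>m. cscale (cnj (ka d)) (mono_neg \<rho> W m)) q"
  proof (rule map_cong[OF refl])
    fix m assume "m \<in> set q"
    then have "sum_list (map snd m) = d" using q unfolding quasi_mono_def mono_degree_ok_def by blast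
    moreover have "mono_neg \<rho> (twist ka W) m = cscale (cnj (ka (sum_list (map snd m)))) (mono_neg \<rho> W m)"
      by (rule mono_neg_twist[OF ch])
    ultimately show "mono_neg \<rho> (twist ka W) m = cscale (cnj (ka d)) (mono_neg \<rho> W m)" by simp
  qed
  show ?thesis unfolding qm_neg_def cscale_sum_list map_map by (simp only: eq comp_def)
qed

lemma qm_pos_twist:
  fixes \<rho> :: "'a::cstar \<Rightarrow> 'c::cstar" and W :: "'g::linordered_ab_group_add \<Rightarrow> 'c"
  assumes ch: "ka \<in> chars" and q: "quasi_mono d q"
  shows "qm_pos \<rho> (twist ka W) q = cscale (ka d) (qm_pos \<rho> W q)"
proof -
  have eq: "map (mono_pos \<rho> (twist ka W)) q = map (\<lambda>m. cscale (ka d) (mono_pos \<rho> W m)) q"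
  proof (rule map_cong[OF refl])
    fix m assume "m \<in> set q"
    then have "sum_list (map snd m) = d" using q unfolding quasi_mono_def mono_degree_ok_def by blast
    moreover have "mono_pos \<rho> (twist ka W) m = cscale (ka (sum_list (map snd m))) (mono_pos \<rho> W m)"
      by (rule mono_pos_twist[OF ch])
    ultimately show "mono_pos \<rho> (twist ka W) m = cscale (ka d) (mono_pos \<rho> W m)" by simp
  qed
  show ?thesis unfolding qm_pos_def cscale_sum_list map_map by (simp only: eq comp_def)
qed

lemma pres_val_twist:
  fixes \<rho> :: "'a::cstar \<Rightarrow> 'c::cstar" and W :: "'g::linordered_ab_group_add \<Rightarrow> 'c"
  assumes ch: "ka \<in> chars" and pr: "presentation F qn qp"
  shows "pres_val \<rho> (twist ka W) F qn a0 qp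
     = \<rho> a0 + (\<Sum>x\<in>F. cscale (cnj (ka x)) (qm_neg \<rho> W (qn x)) + cscale (ka x) (qm_pos \<rho> W (qp x)))"
proof -
  have "(\<Sum>x\<in>F. qm_neg \<rho> (twist ka W) (qn x)) = (\<Sum>x\<in>F. cscale (cnj (ka x)) (qm_neg \<rho> W (qn x)))"
  proof (rule sum.cong[OF refl])
    fix x assume "x \<in> F"
    then have "quasi_mono x (qn x)" using pr unfolding presentation_def by blast
    then show "qm_neg \<rho> (twist ka W) (qn x) = cscale (cnj (ka x)) (qm_neg \<rho> W (qn x))"
      by (rule qm_neg_twist[OF ch])
  qed
  moreover have "(\<Sum>x\<in>F. qm_pos \<rho> (twist ka W) (qp x)) = (\<Sum>x\<in>F. cscale (ka x) (qm_pos \<rho> W (qp x)))"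
  proof (rule sum.cong[OF refl])
    fix x assume "x \<in> F"
    then have "quasi_mono x (qp x)" using pr unfolding presentation_def by blast
    then show "qm_pos \<rho> (twist ka W) (qp x) = cscale (ka x) (qm_pos \<rho> W (qp x))"
      by (rule qm_pos_twist[OF ch])
  qed
  ultimately show ?thesis unfolding pres_val_def by (simp add: sum.distrib algebra_simps)
qed

section \<open>Averaging over characters\<close>

lemma cscale_sum_left: "cscale (\<Sum>j\<in>J. c j) (v::'a::cstar) = (\<Sum>j\<in>J. cscale (c j) v)"
  by (induction J rule: infinite_finite_induct) (auto simp: cscale_add_left)

lemma scaleR_cscale: "r *\<^sub>R cscale c (v::'a::cstar) = cscale (complex_of_real r * c) v"
  by (simp add: cscale_of_real[symmetric] cscale_mult)

lemma L_lin:
  fixes N P :: "'g \<Rightarrow> 'c::cstar" and c :: "nat \<Rightarrow> 'g \<Rightarrow> complex"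
  shows "(\<Sum>j\<in>J. (\<Sum>x\<in>S. cscale (cnj (c j x)) (N x) + cscale (c j x) (P x)))
       = (\<Sum>x\<in>S. cscale (cnj (\<Sum>j\<in>J. c j x)) (N x) + cscale (\<Sum>j\<in>J. c j x) (P x))"
proof -
  have "(\<Sum>x\<in>S. cscale (cnj (\<Sum>j\<in>J. c j x)) (N x) + cscale (\<Sum>j\<in>J. c j x) (P x))
      = (\<Sum>x\<in>S. \<Sum>j\<in>J. cscale (cnj (c j x)) (N x) + cscale (c j x) (P x))"
    by (simp add: cnj_sum cscale_sum_left sum.distrib)
  also have "\<dots> = (\<Sum>j\<in>J. (\<Sum>x\<in>S. cscale (cnj (c j x)) (N x) + cscale (c j x) (P x)))"
    by (rule sum.swap)
  finally show ?thesis by simp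
qed

lemma L_scale:
  fixes N P :: "'g \<Rightarrow> 'c::cstar" and c :: "'g \<Rightarrow> complex"
  shows "r *\<^sub>R (\<Sum>x\<in>S. cscale (cnj (c x)) (N x) + cscale (c x) (P x))
       = (\<Sum>x\<in>S. cscale (cnj (complex_of_real r * c x)) (N x) + cscale (complex_of_real r * c x) (P x))"
  by (simp add: scaleR_sum_right scaleR_right_distrib scaleR_cscale)

lemma geo_bound:
  fixes q :: complex
  assumes "cmod q = 1" "q \<noteq> 1" "1 \<le> n"
  shows "cmod ((\<Sum>j<n. q ^ j) / of_nat n) \<le> 2 / (real n * cmod (1 - q))"
proof -
  have S: "(\<Sum>j<n. q ^ j) = (1 - q ^ n) / (1 - q)" using assms(2) by (simp add: sum_gp_strict)
  have le2: "cmod (1 - q ^ n) \<le> 2"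
    using norm_triangle_ineq4[of 1 "q ^ n"] assms(1) by (simp add: norm_power)
  have cq: "cmod (1 - q) > 0" using assms(2) by simp
  have n0: "real n > 0" using assms(3) by simp
  have "cmod ((\<Sum>j<n. q ^ j) / of_nat n) = cmod (1 - q ^ n) / (real n * cmod (1 - q))"
    unfolding S by (simp add: norm_divide norm_mult mult.commute)
  also have "\<dots> \<le> 2 / (real n * cmod (1 - q))"
    using le2 cq n0 by (intro divide_right_mono) auto
  finally show ?thesis .
qed

lemma avg:
  fixes N P :: "'g::ab_group_add \<Rightarrow> 'c::cstar" and z :: 'c
  assumes "finite F"
  shows "(\<forall>x\<in>F. \<exists>ka\<in>chars. ka x \<noteq> 1) \<Longrightarrow>
    (\<forall>ka\<in>chars. norm (z + (\<Sum>x\<in>F. cscale (cnj (ka x)) (N x) + cscale (ka x) (P x))) \<le> b)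
    \<Longrightarrow> norm z \<le> b"
  using assms
proof (induction F arbitrary: N P b rule: finite_induct)
  case empty
  then show ?case using chars_one by fastforce
next
  case (insert x0 F)
  obtain k0 where k0: "k0 \<in> chars" "k0 x0 \<noteq> 1" using insert.prems(1) by blast
  define q where "q = k0 x0"
  have q1: "cmod q = 1" unfolding q_def by (rule chars_norm[OF k0(1)])
  define K where "K = norm (N x0) + norm (P x0)"
  have K0: "0 \<le> K" unfolding K_def by simp
  define A where "A n y = (\<Sum>j<n. k0 y ^ j) / of_nat n" for n y
  have step: "norm z \<le> b + cmod (A n x0) * K" if n1: "1 \<le> n" for n
  proof -
    define N' where "N' x = cscale (cnj (A n x)) (N x)" for x
    define P' where "P' x = cscale (A n x) (P x)" for x
    show ?thesis
    proof (rule insert.IH[of N' P'])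
      show "\<forall>x\<in>F. \<exists>ka\<in>chars. ka x \<noteq> 1" using insert.prems(1) by blast
      show "\<forall>ka\<in>chars. norm (z + (\<Sum>x\<in>F. cscale (cnj (ka x)) (N' x) + cscale (ka x) (P' x)))
               \<le> b + cmod (A n x0) * K"
      proof
        fix ka :: "'g \<Rightarrow> complex" assume ka: "ka \<in> chars"
        define L where "L c = (\<Sum>x\<in>insert x0 F. cscale (cnj (c x)) (N x) + cscale (c x) (P x))"
          for c :: "'g \<Rightarrow> complex"
        define psi where "psi j y = ka y * k0 y ^ j" for j y
        have bj: "norm (z + L (psi j)) \<le> b" for j
          using bspec[OF insert.prems(2) chars_prod_pow[OF ka k0(1), of j]] unfolding L_def psi_def by simp
        have "(\<Sum>j<n. z + L (psi j)) = real n *\<^sub>R z + (\<Sum>j<n. L (psi j))"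
          by (simp add: sum.distrib scaleR_conv_of_real)
        also have "(\<Sum>j<n. L (psi j)) = L (\<lambda>x. \<Sum>j<n. psi j x)"
          unfolding L_def by (rule L_lin)
        finally have "(1 / real n) *\<^sub>R (\<Sum>j<n. z + L (psi j))
            = (1 / real n) *\<^sub>R (real n *\<^sub>R z) + (1 / real n) *\<^sub>R L (\<lambda>x. \<Sum>j<n. psi j x)"
          by (simp add: scaleR_right_distrib)
        also have "(1 / real n) *\<^sub>R (real n *\<^sub>R z) = z" using n1 by simp
        also have "(1 / real n) *\<^sub>R L (\<lambda>x. \<Sum>j<n. psi j x)
            = L (\<lambda>x. complex_of_real (1 / real n) * (\<Sum>j<n. psi j x))"
          unfolding L_def by (rule L_scale)
        also have "(\<lambda>x. complex_of_real (1 / real n) * (\<Sum>j<n. psi j x)) = (\<lambda>x. ka x * A n x)"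
          unfolding psi_def A_def by (auto simp: sum_distrib_left[symmetric] field_simps)
        finally have avgeq: "(1 / real n) *\<^sub>R (\<Sum>j<n. z + L (psi j)) = z + L (\<lambda>x. ka x * A n x)" .
        have "norm (z + L (\<lambda>x. ka x * A n x)) = (1 / real n) * norm (\<Sum>j<n. z + L (psi j))"
          unfolding avgeq[symmetric] by simp
        also have "\<dots> \<le> (1 / real n) * (\<Sum>j<n. norm (z + L (psi j)))"
          by (intro mult_left_mono norm_sum) simp
        also have "\<dots> \<le> (1 / real n) * (\<Sum>j<n. b)"
          by (intro mult_left_mono sum_mono bj) simp
        also have "\<dots> = b" using n1 by simp
        finally have nb: "norm (z + L (\<lambda>x. ka x * A n x)) \<le> b" .
        define T0 where "T0 = cscale (cnj (ka x0 * A n x0)) (N x0) + cscale (ka x0 * A n x0) (P x0)"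
        have split: "L (\<lambda>x. ka x * A n x) = T0 + (\<Sum>x\<in>F. cscale (cnj (ka x)) (N' x) + cscale (ka x) (P' x))"
          unfolding L_def T0_def N'_def P'_def using insert.hyps
          by (simp add: cscale_mult)
        have "norm T0 \<le> cmod (A n x0) * norm (N x0) + cmod (A n x0) * norm (P x0)"
        proof -
          have a: "norm (cscale (cnj (ka x0 * A n x0)) (N x0)) = cmod (A n x0) * norm (N x0)"
            by (simp add: norm_cscale norm_mult chars_norm[OF ka])
          have b: "norm (cscale (ka x0 * A n x0) (P x0)) = cmod (A n x0) * norm (P x0)"
            by (simp add: norm_cscale norm_mult chars_norm[OF ka])
          show ?thesis unfolding T0_def
            using norm_triangle_ineq[of "cscale (cnj (ka x0 * A n x0)) (N x0)" "cscale (ka x0 * A n x0) (P x0)"]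
            unfolding a b .
        qed
        then have nT0: "norm T0 \<le> cmod (A n x0) * K" unfolding K_def by (simp add: distrib_left)
        have "z + (\<Sum>x\<in>F. cscale (cnj (ka x)) (N' x) + cscale (ka x) (P' x)) = (z + L (\<lambda>x. ka x * A n x)) - T0"
          unfolding split by simp
        then have "norm (z + (\<Sum>x\<in>F. cscale (cnj (ka x)) (N' x) + cscale (ka x) (P' x)))
            \<le> norm (z + L (\<lambda>x. ka x * A n x)) + norm T0"
          using norm_triangle_ineq4 by metis
        then show "norm (z + (\<Sum>x\<in>F. cscale (cnj (ka x)) (N' x) + cscale (ka x) (P' x))) \<le> b + cmod (A n x0) * K"
          using nb nT0 by linarith
      qed
    qed
  qed
  show ?case
  proof (rule ccontr)
    assume "\<not> norm z \<le> b"
    then have D: "0 < norm z - b" by simp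
    have cq: "0 < cmod (1 - q)" using k0(2) unfolding q_def by simp
    obtain n :: nat where n: "2 * K / (cmod (1 - q) * (norm z - b)) < real n" "1 \<le> n"
    proof -
      obtain m :: nat where "2 * K / (cmod (1 - q) * (norm z - b)) < real m" using reals_Archimedean2 by blast
      then show ?thesis using that[of "m + 1"] by simp
    qed
    have "cmod (A n x0) \<le> 2 / (real n * cmod (1 - q))"
      unfolding A_def q_def by (rule geo_bound[OF q1[unfolded q_def] k0(2) n(2)])
    then have "cmod (A n x0) * K \<le> 2 / (real n * cmod (1 - q)) * K" by (rule mult_right_mono[OF _ K0])
    also have "\<dots> < norm z - b"
    proof -
      have "2 * K < real n * (cmod (1 - q) * (norm z - b))"
        using n(1) cq D by (simp add: divide_less_eq mult.commute)
      then show ?thesis using cq n(2) by (simp add: field_simps)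
    qed
    finally show False using step[OF n(2)] by linarith
  qed
qed

theorem proposition4p6:
  fixes V H :: "'g::linordered_ab_group_add \<Rightarrow> 'a::cstar \<Rightarrow> 'a"
    and F F' :: "'g set"
    and qn qp qn' qp' :: "'g \<Rightarrow> ('a \<times> 'g) list list"
    and a0 a0' :: 'a
  assumes act: "is_action V"
    and fine: "\<exists>(\<sigma>::'a \<Rightarrow> 'c::cstar) U. covariant_rep V \<sigma> U"
    and H_def: "\<And>(\<sigma>::'a \<Rightarrow> 'c) U x a. covariant_rep V \<sigma> U \<Longrightarrow> 0 \<le> x \<Longrightarrow>
                  \<sigma> (H x a) = invol (U x) * \<sigma> a * U x"
    and pres: "presentation F qn qp"
    and pres': "presentation F' qn' qp'"
  shows "(\<forall>b. (\<forall>(\<rho>::'a \<Rightarrow> 'c) W. cp_rep V H \<rho> W \<longrightarrow> norm (pres_val \<rho> W F qn a0 qp) \<le> b)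
              \<longrightarrow> norm a0 \<le> b)
       \<and> ((\<forall>(\<rho>::'a \<Rightarrow> 'c) W. cp_rep V H \<rho> W \<longrightarrow>
              pres_val \<rho> W F qn a0 qp = pres_val \<rho> W F' qn' a0' qp') \<longrightarrow> a0 = a0')"
proof -
  obtain \<sigma> :: "'a \<Rightarrow> 'c" and U where cr: "covariant_rep V \<sigma> U" using fine by blast
  have ush: "unital_star_hom \<sigma>" and inj: "inj \<sigma>" using cr unfolding covariant_rep_def by auto
  have cp: "cp_rep V H \<sigma> U"
    using cr H_def[OF cr] unfolding covariant_rep_def cp_rep_def by blast
  have finF: "finite F" and posF: "\<forall>x\<in>F. 0 < x" using pres unfolding presentation_def by auto
  have finF': "finite F'" and posF': "\<forall>x\<in>F'. 0 < x" using pres' unfolding presentation_def by auto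
  define N where "N x = qm_neg \<sigma> U (qn x)" for x
  define P where "P x = qm_pos \<sigma> U (qp x)" for x
  define N' where "N' x = qm_neg \<sigma> U (qn' x)" for x
  define P' where "P' x = qm_pos \<sigma> U (qp' x)" for x
  have tw: "pres_val \<sigma> (twist ka U) F qn a0 qp
      = \<sigma> a0 + (\<Sum>x\<in>F. cscale (cnj (ka x)) (N x) + cscale (ka x) (P x))" if "ka \<in> chars" for ka
    unfolding N_def P_def by (rule pres_val_twist[OF that pres])
  have tw': "pres_val \<sigma> (twist ka U) F' qn' a0' qp'
      = \<sigma> a0' + (\<Sum>x\<in>F'. cscale (cnj (ka x)) (N' x) + cscale (ka x) (P' x))" if "ka \<in> chars" for ka
    unfolding N'_def P'_def by (rule pres_val_twist[OF that pres'])
  have part1: "norm a0 \<le> b"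
    if hb: "\<forall>(\<rho>::'a \<Rightarrow> 'c) W. cp_rep V H \<rho> W \<longrightarrow> norm (pres_val \<rho> W F qn a0 qp) \<le> b" for b
  proof -
    have "norm (\<sigma> a0) \<le> b"
    proof (rule avg[OF finF])
      show "\<forall>x\<in>F. \<exists>ka\<in>chars. ka x \<noteq> 1" using posF chars_sep by blast
      show "\<forall>ka\<in>chars. norm (\<sigma> a0 + (\<Sum>x\<in>F. cscale (cnj (ka x)) (N x) + cscale (ka x) (P x))) \<le> b"
      proof
        fix ka :: "'g \<Rightarrow> complex" assume ka: "ka \<in> chars"
        have "norm (pres_val \<sigma> (twist ka U) F qn a0 qp) \<le> b"
          using hb twist_cp_rep[OF cp ka] by blast
        then show "norm (\<sigma> a0 + (\<Sum>x\<in>F. cscale (cnj (ka x)) (N x) + cscale (ka x) (P x))) \<le> b"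
          using tw[OF ka] by simp
      qed
    qed
    then show ?thesis using star_hom_norm_ge[OF ush inj, of a0] by linarith
  qed
  have part2: "a0 = a0'"
    if he: "\<forall>(\<rho>::'a \<Rightarrow> 'c) W. cp_rep V H \<rho> W \<longrightarrow> pres_val \<rho> W F qn a0 qp = pres_val \<rho> W F' qn' a0' qp'"
  proof -
    define G where "G = F \<union> F'"
    have finG: "finite G" unfolding G_def using finF finF' by simp
    define N2 where "N2 x = (if x \<in> F then N x else 0) - (if x \<in> F' then N' x else 0)" for x
    define P2 where "P2 x = (if x \<in> F then P x else 0) - (if x \<in> F' then P' x else 0)" for x
    have "norm (\<sigma> a0 - \<sigma> a0') \<le> 0"
    proof (rule avg[OF finG])
      show "\<forall>x\<in>G. \<exists>ka\<in>chars. ka x \<noteq> 1" using posF posF' chars_sep unfolding G_def by blast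
      show "\<forall>ka\<in>chars. norm (\<sigma> a0 - \<sigma> a0' + (\<Sum>x\<in>G. cscale (cnj (ka x)) (N2 x) + cscale (ka x) (P2 x))) \<le> 0"
      proof
        fix ka :: "'g \<Rightarrow> complex" assume ka: "ka \<in> chars"
        define T where "T x = cscale (cnj (ka x)) (N x) + cscale (ka x) (P x)" for x
        define T' where "T' x = cscale (cnj (ka x)) (N' x) + cscale (ka x) (P' x)" for x
        have e: "pres_val \<sigma> (twist ka U) F qn a0 qp = pres_val \<sigma> (twist ka U) F' qn' a0' qp'"
          using he twist_cp_rep[OF cp ka] by blast
        have s1: "(\<Sum>x\<in>G. if x \<in> F then T x else 0) = (\<Sum>x\<in>F. T x)"
          using sum.inter_restrict[OF finG, of T F] unfolding G_def by (simp add: Int_absorb1)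
        have s2: "(\<Sum>x\<in>G. if x \<in> F' then T' x else 0) = (\<Sum>x\<in>F'. T' x)"
          using sum.inter_restrict[OF finG, of T' F'] unfolding G_def by (simp add: Int_absorb1)
        have "(\<Sum>x\<in>G. cscale (cnj (ka x)) (N2 x) + cscale (ka x) (P2 x))
            = (\<Sum>x\<in>G. (if x \<in> F then T x else 0) - (if x \<in> F' then T' x else 0))"
          unfolding N2_def P2_def T_def T'_def
          by (intro sum.cong refl) (simp add: cscale_diff_right)
        also have "\<dots> = (\<Sum>x\<in>F. T x) - (\<Sum>x\<in>F'. T' x)"
          by (simp add: sum_subtractf s1 s2)
        finally have "\<sigma> a0 - \<sigma> a0' + (\<Sum>x\<in>G. cscale (cnj (ka x)) (N2 x) + cscale (ka x) (P2 x))
            = pres_val \<sigma> (twist ka U) F qn a0 qp - pres_val \<sigma> (twist ka U) F' qn' a0' qp'"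
          unfolding tw[OF ka] tw'[OF ka] T_def T'_def by simp
        then show "norm (\<sigma> a0 - \<sigma> a0' + (\<Sum>x\<in>G. cscale (cnj (ka x)) (N2 x) + cscale (ka x) (P2 x))) \<le> 0"
          using e by simp
      qed
    qed
    then have "\<sigma> a0 = \<sigma> a0'" by simp
    then show ?thesis using inj by (simp add: inj_eq)
  qed
  show ?thesis using part1 part2 by blast
qed

end
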